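(* Let $\delta\in(0,1)$, let $M\ge\Theta(N\log(N/\delta))$, and for each expert $i\in[M]$ let $W^{(i)}_0\sim\mathcal{N}(0,\frac{\sigma_0^2}{d}\mathbf{I}_d)$ and $n_i^*=\arg\max_{n\in[N]}\langle W^{(i)}_0,v_n\rangle$. Then for each $i\in[M]$, with probability at least $1-\delta$, $$\max_{n\ne n_i^*}\langle W^{(i)}_0,v_n\rangle\le\Big(1-\frac{\delta}{3MN^2}\Big)\langle W^{(i)}_0,v_{n_i^*}\rangle.$$
   Context: $\{v_1,\dots,v_N\}\subset\mathbb{R}^d$ is an orthonormal set (the classification signals); $\sigma_0>0$ is the initialization scale; $W^{(i)}_0\in\mathbb{R}^d$ is the initial FFN weight of expert $i$ of a Mixture-of-Transformers with $M$ experts. *)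

theory Defs
  imports "HOL-Probability.Probability"
begin

text \<open>Vectors of R^d are represented as functions nat => real, indexed by {..<d}.\<close>

definition ip :: "nat \<Rightarrow> (nat \<Rightarrow> real) \<Rightarrow> (nat \<Rightarrow> real) \<Rightarrow> real" where
  "ip d w u = (\<Sum>j<d. w j * u j)"

definition orthonormal_family :: "nat \<Rightarrow> nat \<Rightarrow> (nat \<Rightarrow> nat \<Rightarrow> real) \<Rightarrow> bool" where
  "orthonormal_family d N v \<longleftrightarrow>
     (\<forall>n\<in>{1..N}. \<forall>m\<in>{1..N}. ip d (v n) (v m) = (if n = m then 1 else 0))"

definition gauss_init :: "nat \<Rightarrow> real \<Rightarrow> (nat \<Rightarrow> real) measure" where
  "gauss_init d \<sigma>0 = PiM {..<d} (\<lambda>_. density lborel (normal_density 0 (\<sigma>0 / sqrt (real d))))"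

end

theory Submission
  imports Defs "HOL-Real_Asymp.Real_Asymp"
begin

lemma gauss_prob: assumes "0 < s" "0 < d" shows "prob_space (gauss_init d s)"
  unfolding gauss_init_def
  by (rule prob_space_PiM) (rule prob_space_normal_density, use assms in simp)

lemma sets_gauss: "sets (gauss_init d s) = sets (PiM {..<d} (\<lambda>_. borel :: real measure))"
  unfolding gauss_init_def by (intro sets_PiM_cong) auto

lemma space_gauss: "space (gauss_init d s) = space (PiM {..<d} (\<lambda>_. borel :: real measure))"
  by (rule sets_eq_imp_space_eq) (rule sets_gauss)

lemma meas_gauss_cong: "measurable (gauss_init d s) N = measurable (PiM {..<d} (\<lambda>_. borel :: real measure)) N"
  by (intro measurable_cong_sets sets_gauss refl)

lemma coord_distr:
  assumes "j < d" "0 < s"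
  shows "distributed (gauss_init d s) lborel (\<lambda>W. W j) (normal_density 0 (s / sqrt d))"
proof -
  have "distr (gauss_init d s) lborel (\<lambda>W. W j) = distr (gauss_init d s) (density lborel (normal_density 0 (s / sqrt d))) (\<lambda>W. W j)"
    by (rule distr_cong) auto
  also have "\<dots> = density lborel (normal_density 0 (s / sqrt d))"
    unfolding gauss_init_def
    by (rule distr_PiM_component) (use assms in \<open>auto intro!: prob_space_normal_density\<close>)
  finally show ?thesis unfolding distributed_def
    using assms by (auto simp: meas_gauss_cong)
qed

lemma coord_indep: assumes "0 < s" "0 < d" shows
  "prob_space.indep_vars (gauss_init d s) (\<lambda>_. borel) (\<lambda>j W. W j) {..<d}"
proof -
  have False: "d \<noteq> 0" using assms by simp
  interpret prob_space "gauss_init d s" by (rule gauss_prob[OF assms])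
  have rv: "random_variable borel (\<lambda>W. W j)" if "j \<in> {..<d}" for j
    using that by (auto simp: meas_gauss_cong)
  have "distr (gauss_init d s) (PiM {..<d} (\<lambda>_. borel)) (\<lambda>x. \<lambda>i\<in>{..<d}. x i) = 
        distr (gauss_init d s) (gauss_init d s) (\<lambda>x. x)"
    apply (rule distr_cong)
      apply simp
     apply (simp add: sets_gauss)
    apply (simp add: space_gauss space_PiM PiE_def extensional_def restrict_def)
    by (auto simp: fun_eq_iff)
  also have "\<dots> = gauss_init d s" by (rule distr_id2) simp
  also have "\<dots> = PiM {..<d} (\<lambda>i. distr (gauss_init d s) borel (\<lambda>W. W i))"
    unfolding gauss_init_def
    apply (rule PiM_cong, simp)
    apply (subst distr_cong[where L="density lborel (normal_density 0 (s / sqrt d))"])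
    apply (rule refl) apply simp apply (rule refl)
    by (rule distr_PiM_component[symmetric]) (use assms in \<open>auto intro!: prob_space_normal_density\<close>)
  finally show ?thesis
    using indep_vars_iff_distr_eq_PiM'[where X="\<lambda>j W. W j" and M'="\<lambda>_. borel" and I="{..<d}"] rv False by auto
qed

lemma lin_distr:
  assumes s: "0 < s" and d: "0 < d" and a: "(\<Sum>j<d. (a j)\<^sup>2) > 0"
  shows "distributed (gauss_init d s) lborel (\<lambda>W. \<Sum>j<d. a j * W j)
           (normal_density 0 (s / sqrt d * sqrt (\<Sum>j<d. (a j)\<^sup>2)))"
proof -
  interpret prob_space "gauss_init d s" by (rule gauss_prob[OF s d])
  define I where "I = {j\<in>{..<d}. a j \<noteq> 0}"
  define \<sigma> where "\<sigma> = s / sqrt d"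
  have \<sigma>: "0 < \<sigma>" using s d by (simp add: \<sigma>_def)
  have fI: "finite I" and sub: "I \<subseteq> {..<d}" by (auto simp: I_def)
  have "I \<noteq> {}"
  proof
    assume "I = {}"
    then have "\<forall>j<d. a j = 0" by (auto simp: I_def)
    then show False using a by simp
  qed
  have ind: "indep_vars (\<lambda>_. borel) (\<lambda>j W. a j * W j) I"
    by (rule indep_vars_compose2[OF indep_vars_subset[OF coord_indep[OF s d] sub], where Y="\<lambda>j x. a j * x"]) auto
  have nd: "distributed (gauss_init d s) lborel (\<lambda>W. a j * W j) (normal_density 0 (\<bar>a j\<bar> * \<sigma>))"
    if "j \<in> I" for j
  proof -
    have "a j \<noteq> 0" "j < d" using that by (auto simp: I_def)
    from normal_density_affine[OF coord_distr[OF \<open>j < d\<close> s] _ this(1), of 0] \<sigma>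
    show ?thesis by (simp add: \<sigma>_def)
  qed
  from sum_indep_normal[OF fI \<open>I \<noteq> {}\<close> ind, of "\<lambda>j. \<bar>a j\<bar> * \<sigma>" "\<lambda>_. 0"] nd \<sigma>
  have "distributed (gauss_init d s) lborel (\<lambda>x. \<Sum>j\<in>I. a j * x j)
     (normal_density 0 (sqrt (\<Sum>j\<in>I. (\<bar>a j\<bar> * \<sigma>)\<^sup>2)))"
    by (simp add: I_def)
  moreover have "(\<lambda>x. \<Sum>j\<in>I. a j * x j) = (\<lambda>W. \<Sum>j<d. a j * W j)"
    by (rule ext, rule sum.mono_neutral_left) (auto simp: I_def)
  moreover have "(\<Sum>j\<in>I. (\<bar>a j\<bar> * \<sigma>)\<^sup>2) = \<sigma>\<^sup>2 * (\<Sum>j<d. (a j)\<^sup>2)"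
  proof -
    have "(\<Sum>j\<in>I. (\<bar>a j\<bar> * \<sigma>)\<^sup>2) = (\<Sum>j<d. (\<bar>a j\<bar> * \<sigma>)\<^sup>2)"
      by (rule sum.mono_neutral_left) (auto simp: I_def)
    also have "\<dots> = \<sigma>\<^sup>2 * (\<Sum>j<d. (a j)\<^sup>2)"
      by (simp add: sum_distrib_left power_mult_distrib mult.commute)
    finally show ?thesis .
  qed
  moreover have "sqrt (\<sigma>\<^sup>2 * (\<Sum>j<d. (a j)\<^sup>2)) = \<sigma> * sqrt (\<Sum>j<d. (a j)\<^sup>2)"
    using \<sigma> by (simp add: real_sqrt_mult)
  ultimately show ?thesis by (simp add: \<sigma>_def)
qed

lemma normal_dens_le: "0 < \<tau> \<Longrightarrow> normal_density 0 \<tau> x \<le> 1 / (\<tau> * sqrt (2 * pi))"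
proof -
  assume t: "0 < \<tau>"
  have "sqrt (2 * pi * \<tau>\<^sup>2) = \<tau> * sqrt (2 * pi)" using t by (simp add: real_sqrt_mult mult.commute)
  moreover have e: "exp (-(x - 0)\<^sup>2 / (2 * \<tau>\<^sup>2)) \<le> 1" using t by simp
  have "exp (-(x - 0)\<^sup>2 / (2 * \<tau>\<^sup>2)) / (\<tau> * sqrt (2 * pi)) \<le> 1 / (\<tau> * sqrt (2 * pi))"
    by (rule divide_right_mono[OF e]) (use t in simp)
  ultimately show ?thesis unfolding normal_density_def by simp
qed

lemma exp_half_le: "exp (1/2::real) \<le> 2"
proof -
  have "exp (1/2::real) * exp (1/2) = exp 1" by (simp flip: exp_add)
  also have "\<dots> \<le> 3" by (rule exp_le)
  finally have "(exp (1/2::real))\<^sup>2 \<le> 2\<^sup>2" by (simp add: power2_eq_square)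
  then show ?thesis by (rule power2_le_imp_le) simp
qed

lemma normal_dens_tail_le:
  assumes t: "0 < \<tau>" and x: "0 \<le> x"
  shows "normal_density 0 \<tau> x \<le> exp (- x / \<tau>) / \<tau>"
proof -
  have sq: "sqrt (2 * pi * \<tau>\<^sup>2) = \<tau> * sqrt (2 * pi)" using t by (simp add: real_sqrt_mult mult.commute)
  have "-(x - 0)\<^sup>2 / (2 * \<tau>\<^sup>2) \<le> 1/2 + (- x / \<tau>)"
  proof -
    have "0 \<le> (x / \<tau> - 1)\<^sup>2" by simp
    then have "0 \<le> (x/\<tau>)\<^sup>2 - 2 * (x / \<tau>) + 1" by (simp add: power2_diff)
    then show ?thesis using t by (simp add: field_simps power2_eq_square)
  qed
  then have "exp (-(x - 0)\<^sup>2 / (2 * \<tau>\<^sup>2)) \<le> exp (1/2) * exp (- x / \<tau>)"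
    by (simp flip: exp_add)
  also have "\<dots> \<le> 2 * exp (- x / \<tau>)" using exp_half_le by simp
  finally have e: "exp (-(x - 0)\<^sup>2 / (2 * \<tau>\<^sup>2)) \<le> 2 * exp (- x / \<tau>)" .
  have p: "2 \<le> sqrt (2 * pi)"
  proof -
    have "sqrt 4 \<le> sqrt (2 * pi)" using pi_gt3 by (subst real_sqrt_le_iff) simp
    then show ?thesis by simp
  qed
  have "normal_density 0 \<tau> x = exp (-(x - 0)\<^sup>2 / (2 * \<tau>\<^sup>2)) / (\<tau> * sqrt (2 * pi))"
    unfolding normal_density_def sq by simp
  also have "\<dots> \<le> 2 * exp (- x / \<tau>) / (\<tau> * 2)"
    apply (rule frac_le) using e p t by auto
  finally show ?thesis by simp
qed

context prob_space begin

lemma normal_interval_bound: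
  assumes Z: "distributed M lborel Z (normal_density 0 \<tau>)" and t: "0 < \<tau>" and ab: "a \<le> b"
  shows "prob {x\<in>space M. a \<le> Z x \<and> Z x < b} \<le> (b - a) / (\<tau> * sqrt (2 * pi))"
proof -
  define c where "c = 1 / (\<tau> * sqrt (2 * pi))"
  have c: "0 \<le> c" using t by (simp add: c_def)
  have eq: "{x\<in>space M. a \<le> Z x \<and> Z x < b} = Z -` {a..<b} \<inter> space M" by auto
  have "emeasure M {x\<in>space M. a \<le> Z x \<and> Z x < b} = (\<integral>\<^sup>+x. ennreal (normal_density 0 \<tau> x) * indicator {a..<b} x \<partial>lborel)"
    unfolding eq by (rule distributed_emeasure[OF Z]) simp
  also have "\<dots> \<le> (\<integral>\<^sup>+x. ennreal c * indicator {a..<b} x \<partial>lborel)"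
    apply (rule nn_integral_mono)
    using normal_dens_le[OF t] by (auto simp: c_def indicator_def intro!: ennreal_leI)
  also have "\<dots> = ennreal c * emeasure lborel {a..<b}"
    by (simp add: nn_integral_cmult_indicator)
  also have "\<dots> = ennreal (c * (b - a))" using ab c by (simp add: ennreal_mult)
  finally have "ennreal (prob {x\<in>space M. a \<le> Z x \<and> Z x < b}) \<le> ennreal (c * (b - a))"
    by (simp add: emeasure_eq_measure)
  then show ?thesis using ab c by (simp add: ennreal_le_iff c_def)
qed

lemma normal_tail_bound:
  assumes Z: "distributed M lborel Z (normal_density 0 \<tau>)" and t: "0 < \<tau>" and a: "0 \<le> a"
  shows "prob {x\<in>space M. a \<le> Z x} \<le> exp (- a / \<tau>)"
proof -
  have eq: "{x\<in>space M. a \<le> Z x} = Z -` {a..} \<inter> space M" by auto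
  have "emeasure M {x\<in>space M. a \<le> Z x} = (\<integral>\<^sup>+x. ennreal (normal_density 0 \<tau> x) * indicator {a..} x \<partial>lborel)"
    unfolding eq by (rule distributed_emeasure[OF Z]) simp
  also have "\<dots> \<le> (\<integral>\<^sup>+x. ennreal (exp (- x / \<tau>) / \<tau>) * indicator {a..} x \<partial>lborel)"
    apply (rule nn_integral_mono)
    using normal_dens_tail_le[OF t] a by (auto simp: indicator_def intro!: ennreal_leI)
  also have "\<dots> = 0 - (- exp (- a / \<tau>))"
  proof (rule nn_integral_FTC_atLeast)
    show "(\<lambda>x. exp (- x / \<tau>) / \<tau>) \<in> borel_measurable borel" by measurable
    show "((\<lambda>x. - exp (- x / \<tau>)) has_real_derivative exp (- x / \<tau>) / \<tau>) (at x)" for x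
      using t by (auto intro!: derivative_eq_intros)
    show "0 \<le> exp (- x / \<tau>) / \<tau>" for x using t by simp
    show "((\<lambda>x. - exp (- x / \<tau>)) \<longlongrightarrow> 0) at_top" using t by real_asymp
  qed
  finally have "ennreal (prob {x\<in>space M. a \<le> Z x}) \<le> ennreal (exp (- a / \<tau>))"
    by (simp add: emeasure_eq_measure)
  then show ?thesis by (simp add: ennreal_le_iff)
qed

end


lemma ip_alt: "ip d W u = (\<Sum>j<d. u j * W j)"
  by (simp add: ip_def mult.commute)

lemma ip_meas[measurable]: "(\<lambda>W. ip d W u) \<in> borel_measurable (gauss_init d s)"
  unfolding meas_gauss_cong ip_def by measurable

lemma pred_ip1[measurable]: "Measurable.pred (gauss_init d s) (\<lambda>W. ip d W u \<le> ip d W w)"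
proof -
  have "{W \<in> space (gauss_init d s). ip d W u \<le> ip d W w} \<in> sets (gauss_init d s)" by measurable
  then show ?thesis by (simp add: pred_def)
qed

lemma pred_ip2[measurable]: "Measurable.pred (gauss_init d s) (\<lambda>W. ip d W u \<le> e * ip d W w)"
proof -
  have "{W \<in> space (gauss_init d s). ip d W u \<le> e * ip d W w} \<in> sets (gauss_init d s)" by measurable
  then show ?thesis by (simp add: pred_def)
qed

lemma arg_max_on_fin:
  fixes f :: "'a \<Rightarrow> real"
  assumes "finite S" "S \<noteq> {}"
  shows "arg_max_on f S \<in> S \<and> (\<forall>y\<in>S. f y \<le> f (arg_max_on f S))"
proof -
  have "Max (f ` S) \<in> f ` S" using assms by (intro Max_in) auto
  then obtain x where x1: "x \<in> S" "f x = Max (f ` S)" by auto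
  have x2: "\<forall>y\<in>S. f y \<le> f x" unfolding x1(2) using assms by (auto intro: Max_ge)
  note x = x1(1) x2
  have "is_arg_max f (\<lambda>x. x \<in> S) x" using x by (auto simp: is_arg_max_linorder)
  then have "is_arg_max f (\<lambda>x. x \<in> S) (arg_max_on f S)"
    unfolding arg_max_on_def arg_max_def by (rule someI)
  then show ?thesis by (auto simp: is_arg_max_linorder)
qed

lemma G_meas:
  fixes N :: nat and e :: real and d :: nat and v :: "nat \<Rightarrow> nat \<Rightarrow> real" and s :: real
  defines "X \<equiv> \<lambda>n W. ip d W (v n)"
  shows "{W \<in> space (gauss_init d s).
             let nstar = arg_max_on (\<lambda>n. X n W) {1..N} in
             \<forall>n\<in>{1..N}. n \<noteq> nstar \<longrightarrow> X n W \<le> e * X nstar W} \<in> sets (gauss_init d s)"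
proof -
  define h :: "nat set \<Rightarrow> nat" where "h B = (SOME x. x \<in> B)" for B
  define AM where "AM W = {x\<in>{1..N}. \<forall>y\<in>{1..N}. X y W \<le> X x W}" for W
  have am: "arg_max_on (\<lambda>n. X n W) {1..N} = h (AM W)" for W
    unfolding arg_max_on_def arg_max_def h_def AM_def is_arg_max_linorder by (simp add: Ball_def)
  have eq: "{W \<in> space (gauss_init d s).
             let nstar = arg_max_on (\<lambda>n. X n W) {1..N} in
             \<forall>n\<in>{1..N}. n \<noteq> nstar \<longrightarrow> X n W \<le> e * X nstar W} =
    {W \<in> space (gauss_init d s). \<forall>B\<in>Pow {1..N}.
        (\<forall>x\<in>{1..N}. x \<in> B \<longleftrightarrow> (\<forall>y\<in>{1..N}. X y W \<le> X x W)) \<longrightarrow>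
        (\<forall>n\<in>{1..N}. n \<noteq> h B \<longrightarrow> X n W \<le> e * X (h B) W)}" (is "?L = ?R")
  proof (intro equalityI subsetI)
    fix W assume W: "W \<in> ?L"
    have sp: "W \<in> space (gauss_init d s)" using W by simp
    have all: "\<forall>n\<in>{1..N}. n \<noteq> h (AM W) \<longrightarrow> X n W \<le> e * X (h (AM W)) W"
      using W unfolding Let_def am by blast
    have "\<forall>B\<in>Pow {1..N}.
        (\<forall>x\<in>{1..N}. x \<in> B \<longleftrightarrow> (\<forall>y\<in>{1..N}. X y W \<le> X x W)) \<longrightarrow>
        (\<forall>n\<in>{1..N}. n \<noteq> h B \<longrightarrow> X n W \<le> e * X (h B) W)"
    proof (intro ballI impI)
      fix B n assume B: "B \<in> Pow {1..N}" "\<forall>x\<in>{1..N}. (x \<in> B) = (\<forall>y\<in>{1..N}. X y W \<le> X x W)"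
        and n: "n \<in> {1..N}" "n \<noteq> h B"
      have "B = AM W" using B by (auto simp: AM_def)
      then show "X n W \<le> e * X (h B) W" using n all by auto
    qed
    then show "W \<in> ?R" using sp by blast
  next
    fix W assume W: "W \<in> ?R"
    have "AM W \<in> Pow {1..N}" by (auto simp: AM_def)
    moreover have "\<forall>x\<in>{1..N}. x \<in> AM W \<longleftrightarrow> (\<forall>y\<in>{1..N}. X y W \<le> X x W)" by (auto simp: AM_def)
    ultimately have "\<forall>n\<in>{1..N}. n \<noteq> h (AM W) \<longrightarrow> X n W \<le> e * X (h (AM W)) W"
      using W by blast
    then show "W \<in> ?L" using W unfolding Let_def am by blast
  qed
  show ?thesis unfolding eq unfolding X_def by measurable
qed


lemma exp_bound:
  fixes N M :: nat and \<delta> :: real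
  assumes N: "N \<ge> 2" and \<delta>: "0 < \<delta>" "\<delta> < 1" and MC: "real M \<ge> real N * ln (real N / \<delta>)"
  shows "real N ^ 2 * exp (- (3 * real M)) \<le> \<delta> / 2"
proof -
  define y where "y = real N / \<delta>"
  have y1: "1 < y" using N \<delta> by (simp add: y_def)
  have lny: "0 \<le> ln y" using y1 by simp
  have "ln y \<le> real N * ln y" using N lny by (simp add: mult_le_cancel_right1)
  then have "ln y \<le> real M" using MC by (simp add: y_def)
  then have "exp (- (3 * real M)) \<le> exp (- (3 * ln y))" by simp
  also have "exp (- (3 * ln y)) = 1 / y ^ 3"
  proof -
    have "3 * ln y = ln (y^3)" using y1 by (simp add: ln_realpow)
    then have "exp (3 * ln y) = y^3" using y1 by simp
    then show ?thesis by (simp add: exp_minus divide_inverse)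
  qed
  also have "\<dots> = \<delta>^3 / real N ^ 3" by (simp add: y_def power_divide)
  finally have e: "exp (- (3 * real M)) \<le> \<delta>^3 / real N ^ 3" .
  have "real N ^ 2 * exp (- (3 * real M)) \<le> real N ^ 2 * (\<delta>^3 / real N ^ 3)"
    by (rule mult_left_mono[OF e]) simp
  also have "\<dots> = \<delta>^3 / real N" using N by (simp add: field_simps power_eq_if)
  also have "\<dots> \<le> \<delta>^3 / 2" using N \<delta> by (intro divide_left_mono) auto
  also have "\<dots> \<le> \<delta> / 2"
  proof -
    have "\<delta>^3 \<le> \<delta>^1" using \<delta> by (intro power_decreasing) auto
    then show ?thesis by simp
  qed
  finally show ?thesis .
qed


lemma sumsq_diff:
  assumes orth: "orthonormal_family d N v" and p: "p \<in> {1..N}" and q: "q \<in> {1..N}" and pq: "p \<noteq> q"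
  shows "(\<Sum>j<d. (v p j - v q j)\<^sup>2) = 2"
proof -
  have "(\<Sum>j<d. (v p j - v q j)\<^sup>2) = (\<Sum>j<d. v p j * v p j) - 2 * (\<Sum>j<d. v p j * v q j) + (\<Sum>j<d. v q j * v q j)"
  proof -
    have "(\<Sum>j<d. (v p j - v q j)\<^sup>2) = (\<Sum>j<d. v p j * v p j - 2 * (v p j * v q j) + v q j * v q j)"
      by (simp add: power2_eq_square algebra_simps)
    also have "\<dots> = (\<Sum>j<d. v p j * v p j) - 2 * (\<Sum>j<d. v p j * v q j) + (\<Sum>j<d. v q j * v q j)"
      by (simp add: sum.distrib sum_subtractf sum_distrib_left)
    finally show ?thesis .
  qed
  also have "\<dots> = ip d (v p) (v p) - 2 * ip d (v p) (v q) + ip d (v q) (v q)" by (simp add: ip_def)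
  also have "\<dots> = 2" using orth p q pq unfolding orthonormal_family_def by simp
  finally show ?thesis .
qed

lemma main_fixed:
  fixes d N M :: nat and \<delta> \<sigma>0 :: real and v :: "nat \<Rightarrow> nat \<Rightarrow> real"
  assumes N: "N \<ge> 1" and M: "M \<ge> 1" and \<delta>: "0 < \<delta>" "\<delta> < 1" and s: "\<sigma>0 > 0"
    and orth: "orthonormal_family d N v" and MC: "real M \<ge> real N * ln (real N / \<delta>)"
  shows "measure (gauss_init d \<sigma>0)
          {W \<in> space (gauss_init d \<sigma>0).
             let nstar = arg_max_on (\<lambda>n. ip d W (v n)) {1..N} in
             \<forall>n\<in>{1..N}. n \<noteq> nstar \<longrightarrow>
               ip d W (v n) \<le> (1 - \<delta> / (3 * real M * real N ^ 2)) * ip d W (v nstar)}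
        \<ge> 1 - \<delta>" (is "measure ?P ?G \<ge> _")
proof -
  have d: "0 < d"
  proof (rule ccontr)
    assume "\<not> 0 < d"
    then have "d = 0" by simp
    moreover have "ip d (v 1) (v 1) = 1" using orth N unfolding orthonormal_family_def by auto
    ultimately show False by (simp add: ip_def)
  qed
  interpret prob_space ?P by (rule gauss_prob[OF s d])
  define \<epsilon> where "\<epsilon> = \<delta> / (3 * real M * real N ^ 2)"
  have Gm: "?G \<in> events" using G_meas[where d=d and v=v and N=N and e="1 - \<delta> / (3 * real M * real N ^ 2)" and s=\<sigma>0] by simp
  show ?thesis
  proof (cases "N = 1")
    case True
    have "?G = space ?P"
    proof (intro equalityI subsetI)
      fix W assume W: "W \<in> space ?P"
      have "arg_max_on (\<lambda>n. ip d W (v n)) {1..N} \<in> {1..N}"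
        using arg_max_on_fin[of "{1..N}" "\<lambda>n. ip d W (v n)"] N by auto
      then show "W \<in> ?G" using W True by (auto simp: Let_def)
    qed auto
    then show ?thesis using \<delta> by (simp add: prob_space)
  next
    case False
    then have N2: "N \<ge> 2" using N by simp
    define X where "X n W = ip d W (v n)" for n W
    define \<sigma> where "\<sigma> = \<sigma>0 / sqrt d"
    have \<sigma>: "0 < \<sigma>" using s d by (simp add: \<sigma>_def)
    define T where "T = 3 * real M * \<sigma>"
    have T: "0 \<le> T" using \<sigma> by (simp add: T_def)
    define A where "A p = {W \<in> space ?P. T \<le> X p W}" for p
    define B where "B p q = {W \<in> space ?P. 0 \<le> X p W - X q W \<and> X p W - X q W < \<epsilon> * T}" for p q
    define Pr where "Pr = Sigma {1..N} (\<lambda>p. {1..N} - {p})"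
    have finPr: "finite Pr" by (simp add: Pr_def)
    have cardPr: "card Pr \<le> N * N"
    proof -
      have "Pr \<subseteq> {1..N} \<times> {1..N}" by (auto simp: Pr_def)
      then have "card Pr \<le> card ({1..N} \<times> {1..N})" by (intro card_mono) auto
      then show ?thesis by (simp add: card_cartesian_product)
    qed
    have Xalt: "X p = (\<lambda>W. \<Sum>j<d. v p j * W j)" for p by (simp add: X_def ip_alt fun_eq_iff)
    have dX: "distributed ?P lborel (X p) (normal_density 0 \<sigma>)" if p: "p \<in> {1..N}" for p
    proof -
      have "(\<Sum>j<d. (v p j)\<^sup>2) = ip d (v p) (v p)" by (simp add: ip_def power2_eq_square)
      also have "\<dots> = 1" using orth p unfolding orthonormal_family_def by simp
      finally have one: "(\<Sum>j<d. (v p j)\<^sup>2) = 1" .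
      show ?thesis using lin_distr[OF s d, of "v p"] one by (simp add: Xalt \<sigma>_def)
    qed
    have dD: "distributed ?P lborel (\<lambda>W. X p W - X q W) (normal_density 0 (\<sigma> * sqrt 2))"
      if p: "p \<in> {1..N}" and q: "q \<in> {1..N}" and pq: "p \<noteq> q" for p q
    proof -
      have eq: "(\<lambda>W. X p W - X q W) = (\<lambda>W. \<Sum>j<d. (v p j - v q j) * W j)"
        by (simp add: Xalt fun_eq_iff sum_subtractf left_diff_distrib)
      show ?thesis using lin_distr[OF s d, of "\<lambda>j. v p j - v q j"] sumsq_diff[OF orth p q pq]
        unfolding eq by (simp add: \<sigma>_def)
    qed
    have pA: "prob (A p) \<le> exp (- (3 * real M))" if p: "p \<in> {1..N}" for p
      using normal_tail_bound[OF dX[OF p] \<sigma> T] \<sigma> by (simp add: A_def T_def)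
    have pB: "prob (B p q) \<le> \<delta> / (2 * real N ^ 2)"
      if p: "p \<in> {1..N}" and q: "q \<in> {1..N}" and pq: "p \<noteq> q" for p q
    proof -
      have eT: "0 \<le> \<epsilon> * T" using T \<delta> by (simp add: \<epsilon>_def)
      have "prob (B p q) \<le> (\<epsilon> * T - 0) / (\<sigma> * sqrt 2 * sqrt (2 * pi))"
        using normal_interval_bound[OF dD[OF p q pq] _ eT] \<sigma> by (simp add: B_def)
      also have "\<dots> \<le> (\<epsilon> * T) / (\<sigma> * 2)"
      proof -
        have "sqrt 4 \<le> sqrt (2 * (2 * pi))" using pi_gt3 by (subst real_sqrt_le_iff) simp
        then have "sqrt 4 \<le> sqrt 2 * sqrt (2 * pi)" by (simp only: real_sqrt_mult)
        then have "2 \<le> sqrt 2 * sqrt (2 * pi)" by simp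
        then have "\<sigma> * 2 \<le> \<sigma> * sqrt 2 * sqrt (2 * pi)" using \<sigma> by (simp add: mult.assoc)
        then show ?thesis using eT \<sigma> by (simp only: diff_zero) (intro divide_left_mono, auto)
      qed
      also have "\<dots> = \<delta> / (2 * real N ^ 2)" using \<sigma> M by (simp add: \<epsilon>_def T_def field_simps)
      finally show ?thesis .
    qed
    have Am: "A p \<in> events" for p unfolding A_def X_def by measurable
    have Bm: "B p q \<in> events" for p q unfolding B_def X_def by measurable
    have bad: "space ?P - ?G \<subseteq> (\<Union>pq\<in>Pr. A (fst pq) \<union> B (fst pq) (snd pq))"
    proof
      fix W assume W: "W \<in> space ?P - ?G"
      define ns where "ns = arg_max_on (\<lambda>n. ip d W (v n)) {1..N}"
      have ns: "ns \<in> {1..N}" "\<forall>y\<in>{1..N}. X y W \<le> X ns W"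
        using arg_max_on_fin[of "{1..N}" "\<lambda>n. ip d W (v n)"] N by (auto simp: ns_def X_def)
      obtain n where n: "n \<in> {1..N}" "n \<noteq> ns" "\<not> X n W \<le> (1 - \<epsilon>) * X ns W"
        using W by (auto simp: Let_def ns_def X_def \<epsilon>_def)
      have e01: "0 \<le> \<epsilon>" using \<delta> by (simp add: \<epsilon>_def)
      have le: "X n W \<le> X ns W" using ns n by auto
      have pos: "0 < X ns W"
      proof (rule ccontr)
        assume "\<not> 0 < X ns W"
        then have "X ns W \<le> (1 - \<epsilon>) * X ns W" using e01 by (simp add: algebra_simps mult_nonneg_nonpos)
        then show False using n le by linarith
      qed
      have pr: "(ns, n) \<in> Pr" using ns n by (auto simp: Pr_def)
      have "W \<in> A ns \<union> B ns n"
      proof (cases "T \<le> X ns W")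
        case True then show ?thesis using W by (auto simp: A_def)
      next
        case False
        have "X ns W - X n W < \<epsilon> * X ns W" using n by (simp add: algebra_simps)
        also have "\<epsilon> * X ns W \<le> \<epsilon> * T" using False e01 by (intro mult_left_mono) auto
        finally show ?thesis using W le by (auto simp: B_def)
      qed
      then show "W \<in> (\<Union>pq\<in>Pr. A (fst pq) \<union> B (fst pq) (snd pq))" using pr by force
    qed
    have "prob (space ?P - ?G) \<le> prob (\<Union>pq\<in>Pr. A (fst pq) \<union> B (fst pq) (snd pq))"
      by (rule finite_measure_mono[OF bad]) (use finPr Am Bm in auto)
    also have "\<dots> \<le> (\<Sum>pq\<in>Pr. prob (A (fst pq) \<union> B (fst pq) (snd pq)))"
      by (rule finite_measure_subadditive_finite) (use finPr Am Bm in auto)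
    also have "\<dots> \<le> (\<Sum>pq\<in>Pr. exp (- (3 * real M)) + \<delta> / (2 * real N ^ 2))"
    proof (rule sum_mono)
      fix pq assume pq: "pq \<in> Pr"
      then have h: "fst pq \<in> {1..N}" "snd pq \<in> {1..N}" "fst pq \<noteq> snd pq" by (auto simp: Pr_def)
      have "prob (A (fst pq) \<union> B (fst pq) (snd pq)) \<le> prob (A (fst pq)) + prob (B (fst pq) (snd pq))"
        by (rule measure_subadditive) (use Am Bm in \<open>auto simp: emeasure_eq_measure\<close>)
      also have "\<dots> \<le> exp (- (3 * real M)) + \<delta> / (2 * real N ^ 2)"
        using pA[OF h(1)] pB[OF h] by linarith
      finally show "prob (A (fst pq) \<union> B (fst pq) (snd pq)) \<le> exp (- (3 * real M)) + \<delta> / (2 * real N ^ 2)" .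
    qed
    also have "\<dots> = real (card Pr) * (exp (- (3 * real M)) + \<delta> / (2 * real N ^ 2))" by simp
    also have "\<dots> \<le> real N ^ 2 * (exp (- (3 * real M)) + \<delta> / (2 * real N ^ 2))"
    proof (rule mult_right_mono)
      show "real (card Pr) \<le> real N ^ 2" using cardPr by (simp add: power2_eq_square of_nat_mult[symmetric] del: of_nat_mult)
      show "0 \<le> exp (- (3 * real M)) + \<delta> / (2 * real N ^ 2)" using \<delta> by simp
    qed
    also have "\<dots> = real N ^ 2 * exp (- (3 * real M)) + \<delta> / 2" using N by (simp add: field_simps)
    also have "\<dots> \<le> \<delta>" using exp_bound[OF N2 \<delta> MC] by simp
    finally have "prob (space ?P - ?G) \<le> \<delta>" .
    moreover have "prob (space ?P - ?G) = 1 - prob ?G" by (rule prob_compl[OF Gm])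
    ultimately show ?thesis by simp
  qed
qed


theorem lemma7:
  "\<exists>C>0. \<forall>(d::nat) (N::nat) (M::nat) (\<delta>::real) (\<sigma>0::real) (v :: nat \<Rightarrow> nat \<Rightarrow> real).
     N \<ge> 1 \<and> M \<ge> 1 \<and> 0 < \<delta> \<and> \<delta> < 1 \<and> \<sigma>0 > 0 \<and> orthonormal_family d N v \<and>
     real M \<ge> C * real N * ln (real N / \<delta>) \<longrightarrow>
     (\<forall>i\<in>{1..M}.
        measure (gauss_init d \<sigma>0)
          {W \<in> space (gauss_init d \<sigma>0).
             let nstar = arg_max_on (\<lambda>n. ip d W (v n)) {1..N} in
             \<forall>n\<in>{1..N}. n \<noteq> nstar \<longrightarrow>
               ip d W (v n) \<le> (1 - \<delta> / (3 * real M * real N ^ 2)) * ip d W (v nstar)}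
        \<ge> 1 - \<delta>)"
proof (intro exI[of _ 1] conjI allI impI ballI)
  show "(0::real) < 1" by simp
next
  fix d N M :: nat and \<delta> \<sigma>0 :: real and v :: "nat \<Rightarrow> nat \<Rightarrow> real" and i :: nat
  assume h: "1 \<le> N \<and> 1 \<le> M \<and> 0 < \<delta> \<and> \<delta> < 1 \<and> 0 < \<sigma>0 \<and> orthonormal_family d N v \<and>
     1 * real N * ln (real N / \<delta>) \<le> real M"
  show "1 - \<delta> \<le> measure (gauss_init d \<sigma>0)
          {W \<in> space (gauss_init d \<sigma>0).
             let nstar = arg_max_on (\<lambda>n. ip d W (v n)) {1..N} in
             \<forall>n\<in>{1..N}. n \<noteq> nstar \<longrightarrow>
               ip d W (v n) \<le> (1 - \<delta> / (3 * real M * real N ^ 2)) * ip d W (v nstar)}"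
    using main_fixed[of N M \<delta> \<sigma>0 d v] h by simp
qed

end
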